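(* Let $M\in[\mathbb N]$, $n\in\mathbb N$ and $\xi<\omega_1$. Suppose that $S_\xi^n(M)=\bigcup_{i=1}^k\mathfrak F_i$, where each $\mathfrak F_i$ is a hereditary family of finite subsets of $\mathbb N$. Then there exist $N\in[M]$ and $i_0\le k$ such that $S_\xi^n(N)\subset\mathfrak F_{i_0}$.
   Context: $[M]$ is the set of infinite subsets of $M$, enumerated increasingly $N=(n_i)$; $N(F)=\{n_i:i\in F\}$, $\mathfrak G(N)=\{N(F):F\in\mathfrak G\}$. A family is hereditary if closed under taking subsets. For finite nonempty $F_1$ and nonempty $F_2$, $F_1<F_2$ means $\max F_1<\min F_2$. For hereditary $\mathfrak G$, $\mathfrak G^n=\{\bigcup_{i=1}^nF_i:F_1<\cdots<F_n,\ F_i\in\mathfrak G\}$; $S_\xi^n(N)$ means $(S_\xi^n)(N)$. For each countable ordinal $\xi$ fix successor ordinals $(\beta_j(\xi)+1)_j$: equal to $\xi$ if $\xi$ is a successor, strictly increasing to $\xi$ if $\xi$ is a limit. Schreier families: $S_0=\{\{j\}:j\in\mathbb N\}\cup\{\emptyset\}$; $S_{\zeta+1}=\{\bigcup_{i=1}^jF_i:j\le\min F_1,\ F_1<\cdots<F_j,\ F_i\in S_\zeta\}\cup\{\emptyset\}$; for limit $\xi$, $S_\xi=\{F:F\in S_{\beta_j(\xi)+1}\text{ for some }j\le\min F\}$. *)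

theory Defs
  imports Main "HOL-Library.Infinite_Set" "HOL-Library.Countable_Set"
begin

definition osucc :: "'o::wellorder \<Rightarrow> 'o" where
  "osucc \<gamma> = (LEAST x. \<gamma> < x)"

definition is_zero_ord :: "'o::wellorder \<Rightarrow> bool" where
  "is_zero_ord \<xi> \<longleftrightarrow> \<not> (\<exists>\<gamma>. \<gamma> < \<xi>)"

definition is_succ_ord :: "'o::wellorder \<Rightarrow> bool" where
  "is_succ_ord \<xi> \<longleftrightarrow> (\<exists>\<gamma>. \<gamma> < \<xi> \<and> (\<forall>x. \<gamma> < x \<longrightarrow> \<xi> \<le> x))"

definition is_limit_ord :: "'o::wellorder \<Rightarrow> bool" where
  "is_limit_ord \<xi> \<longleftrightarrow> \<not> is_zero_ord \<xi> \<and> \<not> is_succ_ord \<xi>"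

definition opred :: "'o::wellorder \<Rightarrow> 'o" where
  "opred \<xi> = (THE \<gamma>. \<gamma> < \<xi> \<and> (\<forall>x. \<gamma> < x \<longrightarrow> \<xi> \<le> x))"

text \<open>The fixed system of successor ordinals \<open>(\<beta>_j(\<eta>)+1)_{j\<ge>1}\<close> for all \<open>\<eta> \<le> \<xi>\<close>
  (only indices \<open>j \<ge> 1\<close> are used).\<close>
definition fundamental_system :: "('o::wellorder \<Rightarrow> nat \<Rightarrow> 'o) \<Rightarrow> 'o \<Rightarrow> bool" where
  "fundamental_system \<beta> \<xi> \<longleftrightarrow>
     (\<forall>\<eta>\<le>\<xi>.
        (is_succ_ord \<eta> \<longrightarrow> (\<forall>j\<ge>1. osucc (\<beta> \<eta> j) = \<eta>)) \<and>
        (is_limit_ord \<eta> \<longrightarrow>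
           (\<forall>i j. 1 \<le> i \<longrightarrow> i < j \<longrightarrow> \<beta> \<eta> i < \<beta> \<eta> j) \<and>
           (\<forall>j\<ge>1. osucc (\<beta> \<eta> j) < \<eta>) \<and>
           (\<forall>\<gamma><\<eta>. \<exists>j\<ge>1. \<gamma> < osucc (\<beta> \<eta> j))))"

definition schreier0 :: "nat set set" where
  "schreier0 = insert {} {{j} | j. 1 \<le> j}"

definition schreier_step :: "nat set set \<Rightarrow> nat set set" where
  "schreier_step G = insert {}
     {\<Union>i<j. B i | j B. 1 \<le> j \<and> (\<forall>i<j. B i \<in> G \<and> B i \<noteq> {} \<and> finite (B i)) \<and>
        (\<forall>i. Suc i < j \<longrightarrow> Max (B i) < Min (B (Suc i))) \<and> j \<le> Min (B 0)}"

definition schreier_limit :: "(nat \<Rightarrow> nat set set) \<Rightarrow> nat set set" where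
  "schreier_limit T = {F. F = {} \<or> (\<exists>j. 1 \<le> j \<and> j \<le> Min F \<and> F \<in> T j)}"

definition schreier :: "('o::wellorder \<Rightarrow> nat \<Rightarrow> 'o) \<Rightarrow> 'o \<Rightarrow> nat set set" where
  "schreier \<beta> = wfrec {(x, y). x < y}
     (\<lambda>R \<xi>. if is_zero_ord \<xi> then schreier0
            else if is_succ_ord \<xi> then schreier_step (R (opred \<xi>))
            else schreier_limit (\<lambda>j. R (osucc (\<beta> \<xi> j))))"

definition hereditary :: "nat set set \<Rightarrow> bool" where
  "hereditary \<F> \<longleftrightarrow> (\<forall>A\<in>\<F>. \<forall>B. B \<subseteq> A \<longrightarrow> B \<in> \<F>)"

text \<open>\<open>\<G>^n\<close>: unions of \<open>n\<close> successive members (empty members allowed,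
  with the convention that \<open>\<emptyset> < F\<close> and \<open>F < \<emptyset>\<close>).\<close>
definition fam_power :: "nat set set \<Rightarrow> nat \<Rightarrow> nat set set" where
  "fam_power G n = {\<Union>i<n. B i | B. (\<forall>i<n. B i \<in> G) \<and>
      (\<forall>i i'. i < i' \<longrightarrow> i' < n \<longrightarrow> (\<forall>a\<in>B i. \<forall>b\<in>B i'. a < b))}"

text \<open>\<open>N = (n_i)_{i\<ge>1}\<close> enumerated increasingly; \<open>N(F) = {n_i : i \<in> F}\<close>.\<close>
definition fam_image :: "nat set \<Rightarrow> nat set set \<Rightarrow> nat set set" where
  "fam_image N G = (\<lambda>F. (\<lambda>i. enumerate N (i - 1)) ` F) ` G"

end

theory Submission
  imports Defs
begin

lemma schreier_unfold:
  "schreier \<beta> \<xi> = (if is_zero_ord \<xi> then schreier0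
            else if is_succ_ord \<xi> then schreier_step (cut (schreier \<beta>) {(x, y). x < y} \<xi> (opred \<xi>))
            else schreier_limit (\<lambda>j. cut (schreier \<beta>) {(x, y). x < y} \<xi> (osucc (\<beta> \<xi> j))))"
  unfolding schreier_def by (subst wfrec[OF wellorder_class.wf]) simp

lemma opred_prop:
  fixes \<eta> :: "'o::wellorder"
  assumes "is_succ_ord \<eta>"
  shows "opred \<eta> < \<eta> \<and> (\<forall>x. opred \<eta> < x \<longrightarrow> \<eta> \<le> x)"
proof -
  obtain g where g: "g < \<eta>" "\<forall>x. g < x \<longrightarrow> \<eta> \<le> x" using assms unfolding is_succ_ord_def by blast
  have "\<exists>!g. g < \<eta> \<and> (\<forall>x. g < x \<longrightarrow> \<eta> \<le> x)"
  proof (rule ex1I[of _ g])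
    show "g < \<eta> \<and> (\<forall>x. g < x \<longrightarrow> \<eta> \<le> x)" using g by blast
    fix y assume y: "y < \<eta> \<and> (\<forall>x. y < x \<longrightarrow> \<eta> \<le> x)"
    show "y = g"
    proof (rule ccontr)
      assume "y \<noteq> g"
      then have "y < g \<or> g < y" by auto
      then show False using y g by (meson leD)
    qed
  qed
  then show ?thesis unfolding opred_def by (rule theI')
qed

lemma schreier_limit_cong:
  "(\<And>j. 1 \<le> j \<Longrightarrow> T j = T' j) \<Longrightarrow> schreier_limit T = schreier_limit T'"
  unfolding schreier_limit_def by auto

lemma schreier_induct:
  fixes \<xi> :: "'o::wellorder"
  assumes fs: "fundamental_system \<beta> \<xi>"
    and P0: "P schreier0"
    and PS: "\<And>G. P G \<Longrightarrow> P (schreier_step G)"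
    and PL: "\<And>T. (\<And>j. 1 \<le> j \<Longrightarrow> P (T j)) \<Longrightarrow> P (schreier_limit T)"
  shows "\<eta> \<le> \<xi> \<Longrightarrow> P (schreier \<beta> \<eta>)"
proof (induction \<eta> rule: less_induct)
  case (less \<eta>)
  show ?case
  proof (cases "is_zero_ord \<eta>")
    case True
    then show ?thesis by (subst schreier_unfold) (simp add: P0)
  next
    case nz: False
    show ?thesis
    proof (cases "is_succ_ord \<eta>")
      case True
      have lt: "opred \<eta> < \<eta>" using opred_prop[OF True] by blast
      have "P (schreier \<beta> (opred \<eta>))" using less lt by auto
      then show ?thesis using nz True lt by (subst schreier_unfold) (simp add: PS cut_apply)
    next
      case ns: False
      then have lim: "is_limit_ord \<eta>" using nz unfolding is_limit_ord_def by simp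
      have lt: "\<And>j. 1 \<le> j \<Longrightarrow> osucc (\<beta> \<eta> j) < \<eta>"
        using fs less.prems lim unfolding fundamental_system_def by blast
      have eq: "schreier_limit (\<lambda>j. cut (schreier \<beta>) {(x, y). x < y} \<eta> (osucc (\<beta> \<eta> j)))
              = schreier_limit (\<lambda>j. schreier \<beta> (osucc (\<beta> \<eta> j)))"
        by (rule schreier_limit_cong) (simp add: cut_apply lt)
      have "P (schreier_limit (\<lambda>j. schreier \<beta> (osucc (\<beta> \<eta> j))))"
        by (rule PL) (meson less.IH less.prems lt order.strict_implies_order order.trans)
      then show ?thesis using nz ns eq by (subst schreier_unfold) simp
    qed
  qed
qed

definition psucc :: "(nat \<Rightarrow> nat set) \<Rightarrow> nat \<Rightarrow> bool" where
  "psucc B j \<longleftrightarrow> (\<forall>i i'. i < i' \<longrightarrow> i' < j \<longrightarrow> (\<forall>a\<in>B i. \<forall>b\<in>B i'. a < b))"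

lemma blocks_bound:
  assumes hG: "hereditary G" and BG: "\<forall>i<j. B i \<in> G" and pB: "psucc B j"
    and FX: "\<forall>r<p. F r \<subseteq> (\<Union>i<j. B i) \<and> F r \<noteq> {} \<and> F r \<notin> G"
    and pF: "psucc F p"
    and x: "x \<in> (\<Union>i<j. B i)"
  shows "p < j"
proof -
  define U where "U = (\<Union>i<j. B i)"
  define idx where "idx a = (SOME i. i<j \<and> a \<in> B i)" for a
  have idx: "idx a < j \<and> a \<in> B (idx a)" if "a \<in> U" for a
    unfolding idx_def by (rule someI_ex) (use that U_def in auto)
  have mono: "idx a \<le> idx b" if "a \<in> U" "b \<in> U" "a < b" for a b
  proof (rule ccontr)
    assume "\<not> idx a \<le> idx b"
    then have "idx b < idx a" by simp
    then have "b < a" using pB idx[OF that(1)] idx[OF that(2)] unfolding psucc_def by blast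
    then show False using that by simp
  qed
  have two: "\<exists>u v. u \<in> F r \<and> v \<in> F r \<and> idx u < idx v" if r: "r < p" for r
  proof -
    obtain x where x: "x \<in> F r" using FX r by blast
    have "\<exists>y\<in>F r. idx y \<noteq> idx x"
    proof (rule ccontr)
      assume "\<not> ?thesis"
      then have "F r \<subseteq> B (idx x)" using idx FX r U_def by fastforce
      moreover have "B (idx x) \<in> G" using BG idx[of x] x FX r U_def by blast
      ultimately have "F r \<in> G" using hG unfolding hereditary_def by blast
      then show False using FX r by blast
    qed
    then obtain y where y: "y \<in> F r" "idx y \<noteq> idx x" by blast
    show ?thesis
    proof (cases "idx x < idx y")
      case True then show ?thesis using x y by blast
    next
      case False then have "idx y < idx x" using y by simp
      then show ?thesis using x y by blast
    qed
  qed
  then have "\<forall>r. \<exists>uv. r < p \<longrightarrow> fst uv \<in> F r \<and> snd uv \<in> F r \<and> idx (fst uv) < idx (snd uv)"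
    by fastforce
  then obtain w where w: "\<And>r. r < p \<Longrightarrow> fst (w r) \<in> F r \<and> snd (w r) \<in> F r \<and> idx (fst (w r)) < idx (snd (w r))"
    by metis
  define u where "u r = fst (w r)" for r
  define v where "v r = snd (w r)" for r
  have uv: "u r \<in> F r \<and> v r \<in> F r \<and> idx (u r) < idx (v r)" if "r < p" for r
    using w[OF that] u_def v_def by simp
  have inU: "a \<in> U" if "a \<in> F r" "r < p" for a r using FX that U_def by blast
  have low: "r \<le> idx (u r)" if "r < p" for r
    using that
  proof (induction r)
    case 0 then show ?case by simp
  next
    case (Suc r)
    then have r: "r < p" by simp
    have "v r < u (Suc r)" using pF uv[OF r] uv[OF Suc.prems] Suc.prems unfolding psucc_def by blast
    then have "idx (v r) \<le> idx (u (Suc r))"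
      using mono inU uv[OF r] uv[OF Suc.prems] r Suc.prems by blast
    then show ?case using Suc.IH[OF r] uv[OF r] by simp
  qed
  show ?thesis
  proof (cases p)
    case 0
    then show ?thesis using x by auto
  next
    case (Suc q)
    then have q: "q < p" by simp
    have "idx (v q) < j" using idx inU uv[OF q] q by blast
    then show ?thesis using low[OF q] uv[OF q] Suc by simp
  qed
qed

lemma blocks_exist:
  fixes b :: nat and L :: "nat set"
  assumes cpt: "\<forall>L. infinite L \<longrightarrow> (\<exists>F\<subseteq>L. finite F \<and> F \<notin> S)" and e: "{} \<in> S"
    and L: "infinite L"
  shows "\<exists>F::nat \<Rightarrow> nat set. \<forall>r. F r \<subseteq> L \<and> finite (F r) \<and> F r \<noteq> {} \<and> F r \<notin> S \<and> (\<forall>a\<in>F r. b < a)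
            \<and> (\<forall>r'. r < r' \<longrightarrow> (\<forall>a\<in>F r. \<forall>c\<in>F r'. a < c))"
proof -
  have ex: "\<exists>F. F \<subseteq> L \<and> finite F \<and> F \<noteq> {} \<and> F \<notin> S \<and> (\<forall>a\<in>F. c < a)" for c
  proof -
    have "infinite (L \<inter> {c<..})"
    proof
      assume "finite (L \<inter> {c<..})"
      moreover have "L \<subseteq> (L \<inter> {c<..}) \<union> {..c}" by (auto simp: not_le)
      ultimately have "finite L" using finite_subset by blast
      then show False using L by simp
    qed
    then obtain F where "F \<subseteq> L \<inter> {c<..}" "finite F" "F \<notin> S" using cpt by blast
    then show ?thesis using e by (intro exI[of _ F]) auto
  qed
  define pick where "pick c = (SOME F. F \<subseteq> L \<and> finite F \<and> F \<noteq> {} \<and> F \<notin> S \<and> (\<forall>a\<in>F. c < a))" for c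
  have pick: "pick c \<subseteq> L \<and> finite (pick c) \<and> pick c \<noteq> {} \<and> pick c \<notin> S \<and> (\<forall>a\<in>pick c. c < a)" for c
    unfolding pick_def by (rule someI_ex) (rule ex)
  define cc where "cc = rec_nat b (\<lambda>_ x. Max (pick x))"
  have cc0: "cc 0 = b" and ccS: "cc (Suc r) = Max (pick (cc r))" for r by (simp_all add: cc_def)
  define F where "F r = pick (cc r)" for r
  have ccinc: "cc r < cc (Suc r)" for r
    using pick[of "cc r"] ccS[of r] by (metis Max_in)
  have ccmono: "r \<le> r' \<Longrightarrow> cc r \<le> cc r'" for r r'
    using ccinc by (meson lift_Suc_mono_le less_imp_le)
  have ord: "(\<forall>a\<in>F r. \<forall>c\<in>F r'. a < c)" if "r < r'" for r r'
  proof (intro ballI)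
    fix a c assume a: "a \<in> F r" and c: "c \<in> F r'"
    have "a \<le> cc (Suc r)" using a pick[of "cc r"] ccS[of r] F_def by simp
    also have "\<dots> \<le> cc r'" using ccmono that by simp
    also have "\<dots> < c" using c pick[of "cc r'"] F_def by simp
    finally show "a < c" .
  qed
  have lb: "\<forall>a\<in>F r. b < a" for r
  proof
    fix a assume "a \<in> F r"
    then have "cc r < a" using pick F_def by simp
    moreover have "b \<le> cc r" using ccmono[of 0 r] cc0 by simp
    ultimately show "b < a" by simp
  qed
  have "\<forall>r. F r \<subseteq> L \<and> finite (F r) \<and> F r \<noteq> {} \<and> F r \<notin> S \<and> (\<forall>a\<in>F r. b < a)
            \<and> (\<forall>r'. r < r' \<longrightarrow> (\<forall>a\<in>F r. \<forall>c\<in>F r'. a < c))"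
  proof (intro allI conjI)
    fix r
    show "F r \<subseteq> L" "finite (F r)" "F r \<noteq> {}" "F r \<notin> S" using pick[of "cc r"] F_def by simp_all
    show "\<forall>a\<in>F r. b < a" by (rule lb)
    fix r' show "r < r' \<longrightarrow> (\<forall>a\<in>F r. \<forall>c\<in>F r'. a < c)" using ord by blast
  qed
  then show ?thesis by (rule exI[where x=F])
qed

definition spreading :: "nat set set \<Rightarrow> bool" where
  "spreading S \<longleftrightarrow> (\<forall>h F. strict_mono h \<longrightarrow> F \<in> S \<longrightarrow> h ` F \<in> S)"

definition cptf :: "nat set set \<Rightarrow> bool" where
  "cptf S \<longleftrightarrow> (\<forall>L. infinite L \<longrightarrow> (\<exists>F\<subseteq>L. finite F \<and> F \<notin> S))"

definition goodf :: "nat set set \<Rightarrow> bool" where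
  "goodf S \<longleftrightarrow> hereditary S \<and> spreading S \<and> cptf S \<and> {} \<in> S \<and> (\<forall>F\<in>S. finite F \<and> 0 \<notin> F)"

definition rstep :: "nat set set \<Rightarrow> nat set set" where
  "rstep G = insert {} {X. X \<noteq> {} \<and> (\<exists>j B. (\<forall>i<j. B i \<in> G \<and> finite (B i)) \<and> psucc B j
       \<and> X = (\<Union>i<j. B i) \<and> j \<le> Min X)}"

lemma consec_psucc:
  assumes ne: "\<forall>i<j. B i \<noteq> {} \<and> finite (B i)"
    and c: "\<forall>i. Suc i < j \<longrightarrow> Max (B i) < Min (B (Suc i))"
  shows "psucc B j"
proof -
  have key: "Max (B i) < Min (B (i + d + 1))" if "i + d + 1 < j" for i d
    using that
  proof (induction d)
    case 0 then show ?case using c[rule_format, of i] by simp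
  next
    case (Suc d)
    then have "Max (B i) < Min (B (i + d + 1))" by (metis Suc_lessD add_Suc_right add_Suc_shift)
    also have "\<dots> \<le> Max (B (i + d + 1))"
    proof -
      have "i + d + 1 < j" using Suc.prems by simp
      then have "B (i + d + 1) \<noteq> {}" "finite (B (i + d + 1))" using ne by blast+
      then show ?thesis using Max_ge Min_in by blast
    qed
    also have "\<dots> < Min (B (Suc (i + d + 1)))" using c[rule_format, of "i + d + 1"] Suc.prems by simp
    finally show ?case by simp
  qed
  show ?thesis unfolding psucc_def
  proof (intro allI impI ballI)
    fix i i' a b assume ii: "i < i'" "i' < j" and a: "a \<in> B i" and b: "b \<in> B i'"
    define d where "d = i' - i - 1"
    have d: "i' = i + d + 1" using ii d_def by simp
    have "a \<le> Max (B i)" using a ne ii by simp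
    also have "\<dots> < Min (B i')" using key[of i d] d ii by simp
    also have "\<dots> \<le> b" using b ne ii by simp
    finally show "a < b" .
  qed
qed

lemma psucc_less: "psucc B (Suc j) \<Longrightarrow> psucc B j"
  unfolding psucc_def by (meson less_SucI)

lemma compress:
  assumes "psucc B j"
  shows "\<exists>j' B'. j' \<le> j \<and> (\<forall>i<j'. B' i \<noteq> {} \<and> (\<exists>i0<j. B' i = B i0)) \<and> psucc B' j'
           \<and> (\<Union>i<j'. B' i) = (\<Union>i<j. B i)"
  using assms
proof (induction j)
  case 0
  have "psucc B 0" by (simp add: psucc_def)
  then show ?case by (intro exI[where x=0] exI[where x=B]) simp
next
  case (Suc j)
  have psj: "psucc B j" using Suc.prems by (rule psucc_less)
  obtain j' B' where h1: "j' \<le> j" and h2: "\<forall>i<j'. B' i \<noteq> {} \<and> (\<exists>i0<j. B' i = B i0)"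
    and h3: "psucc B' j'" and h4: "(\<Union>i<j'. B' i) = (\<Union>i<j. B i)"
    using Suc.IH[OF psj] by (elim exE conjE) (rule that)
  have U: "(\<Union>i<Suc j. B i) = (\<Union>i<j. B i) \<union> B j" by (simp add: lessThan_Suc Un_commute)
  show ?case
  proof (cases "B j = {}")
    case True
    have e1: "(\<Union>i<j'. B' i) = (\<Union>i<Suc j. B i)" using h4 U True by simp
    have e2: "\<forall>i<j'. B' i \<noteq> {} \<and> (\<exists>i0<Suc j. B' i = B i0)"
    proof (intro allI impI)
      fix i assume "i < j'"
      then obtain i0 where "i0 < j" "B' i = B i0" "B' i \<noteq> {}" using h2 by blast
      then show "B' i \<noteq> {} \<and> (\<exists>i0<Suc j. B' i = B i0)" using less_SucI by blast
    qed
    have e3: "j' \<le> Suc j" using h1 by simp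
    show ?thesis by (rule exI[where x=j'], rule exI[where x=B']) (intro conjI e1 e2 e3 h3)
  next
    case False
    define B'' where "B'' = B'(j' := B j)"
    have a: "\<forall>i<Suc j'. B'' i \<noteq> {} \<and> (\<exists>i0<Suc j. B'' i = B i0)"
    proof (intro allI impI)
      fix i assume "i < Suc j'"
      show "B'' i \<noteq> {} \<and> (\<exists>i0<Suc j. B'' i = B i0)"
      proof (cases "i = j'")
        case True
        then have "B'' i = B j" unfolding B''_def by simp
        then show ?thesis using False by blast
      next
        case ne: False
        then have "i < j'" using \<open>i < Suc j'\<close> by simp
        then obtain i0 where "i0 < j" "B' i = B i0" "B' i \<noteq> {}" using h2 by blast
        moreover have "B'' i = B' i" unfolding B''_def using ne by simp
        ultimately show ?thesis using less_SucI by metis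
      qed
    qed
    have b: "psucc B'' (Suc j')"
      unfolding psucc_def
    proof (intro allI impI ballI)
      fix i i' x y assume ii: "i < i'" "i' < Suc j'" and x: "x \<in> B'' i" and y: "y \<in> B'' i'"
      have ij: "i < j'" using ii by simp
      have xi: "x \<in> B' i" using x ij unfolding B''_def by simp
      show "x < y"
      proof (cases "i' = j'")
        case True
        then have "y \<in> B j" using y unfolding B''_def by simp
        obtain i0 where "i0 < j" "B' i = B i0" using h2 ij by blast
        then have "x \<in> B i0" using xi by simp
        then show ?thesis using Suc.prems \<open>i0 < j\<close> \<open>y \<in> B j\<close> unfolding psucc_def by blast
      next
        case False
        then have "i' < j'" "y \<in> B' i'" using ii y unfolding B''_def by simp_all
        then show ?thesis using h3 ii xi unfolding psucc_def by blast
      qed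
    qed
    have c: "(\<Union>i<Suc j'. B'' i) = (\<Union>i<Suc j. B i)"
    proof -
      have "(\<Union>i<Suc j'. B'' i) = (\<Union>i<j'. B'' i) \<union> B'' j'" by (simp add: lessThan_Suc Un_commute)
      also have "(\<Union>i<j'. B'' i) = (\<Union>i<j'. B' i)" unfolding B''_def by (intro SUP_cong) simp_all
      also have "B'' j' = B j" unfolding B''_def by simp
      finally show ?thesis using h4 U by simp
    qed
    have d: "Suc j' \<le> Suc j" using h1 by simp
    show ?thesis by (rule exI[where x="Suc j'"], rule exI[where x=B'']) (intro conjI a b c d)
  qed
qed

lemma step_eq: "schreier_step G = rstep G"
proof
  show "schreier_step G \<subseteq> rstep G"
  proof
    fix X assume "X \<in> schreier_step G"
    then consider "X = {}" | j B where "1 \<le> j" "\<forall>i<j. B i \<in> G \<and> B i \<noteq> {} \<and> finite (B i)"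
        "\<forall>i. Suc i < j \<longrightarrow> Max (B i) < Min (B (Suc i))" "j \<le> Min (B 0)" "X = (\<Union>i<j. B i)"
      unfolding schreier_step_def by blast
    then show "X \<in> rstep G"
    proof cases
      case 1 then show ?thesis by (simp add: rstep_def)
    next
      case 2
      have ps: "psucc B j" using consec_psucc 2 by blast
      have "B 0 \<noteq> {}" "B 0 \<subseteq> X" using 2 by auto
      then have ne: "X \<noteq> {}" by blast
      have fin: "finite X" using 2 by auto
      have "Min (B 0) \<le> Min X"
      proof -
        have "Min X \<in> X" using ne fin by simp
        then obtain i where i: "i < j" "Min X \<in> B i" using 2 by auto
        show ?thesis
        proof (cases "i = 0")
          case True then show ?thesis using i 2 by simp
        next
          case False
          obtain a where "a \<in> B 0" using 2 by force
          then have "a < Min X" using ps i False unfolding psucc_def by blast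
          have "Min (B 0) \<le> a" using \<open>a \<in> B 0\<close> 2 by (intro Min_le) auto
          then show ?thesis using \<open>a < Min X\<close> by simp
        qed
      qed
      moreover have "j \<le> Min (B 0)" using 2(4) .
      ultimately have "j \<le> Min X" by linarith
      then show ?thesis unfolding rstep_def using 2 ps ne by blast
    qed
  qed
next
  show "rstep G \<subseteq> schreier_step G"
  proof
    fix X assume "X \<in> rstep G"
    then consider "X = {}" | j B where "X \<noteq> {}" "\<forall>i<j. B i \<in> G \<and> finite (B i)" "psucc B j"
      "X = (\<Union>i<j. B i)" "j \<le> Min X"
      unfolding rstep_def by blast
    then show "X \<in> schreier_step G"
    proof cases
      case 1 then show ?thesis by (simp add: schreier_step_def)
    next
      case 2
      obtain j' B' where h: "j' \<le> j" "\<forall>i<j'. B' i \<noteq> {} \<and> (\<exists>i0<j. B' i = B i0)" "psucc B' j'"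
           "(\<Union>i<j'. B' i) = (\<Union>i<j. B i)" using compress[OF 2(3)] by blast
      have j1: "1 \<le> j'"
      proof (rule ccontr)
        assume "\<not> 1 \<le> j'"
        then have "j' = 0" by simp
        then have "(\<Union>i<j. B i) = {}" using h(4) by simp
        then show False using 2 by simp
      qed
      have BG: "\<forall>i<j'. B' i \<in> G \<and> B' i \<noteq> {} \<and> finite (B' i)" using h(2) 2(2) by metis
      have fX: "finite X" using 2 by auto
      have cons: "\<forall>i. Suc i < j' \<longrightarrow> Max (B' i) < Min (B' (Suc i))"
      proof (intro allI impI)
        fix i assume "Suc i < j'"
        then show "Max (B' i) < Min (B' (Suc i))" using h(3) BG unfolding psucc_def
          by (metis Max_in Min_in Suc_lessD lessI)
      qed
      have "Min X \<le> Min (B' 0)"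
      proof -
        have "B' 0 \<subseteq> X" using h(4) 2(4) j1 by auto
        moreover have "B' 0 \<noteq> {}" "finite (B' 0)" using BG j1 by auto
        ultimately have "Min (B' 0) \<in> X" using Min_in by blast
        then show ?thesis using fX by simp
      qed
      then have "j' \<le> Min (B' 0)" using h(1) 2(5) by simp
      moreover have "X = (\<Union>i<j'. B' i)" using h(4) 2(4) by simp
      ultimately show ?thesis unfolding schreier_step_def
        by (intro insertI2 CollectI exI[where x=j'] exI[where x=B'] conjI j1 BG cons) auto
    qed
  qed
qed

lemma Min_spread:
  fixes h :: "nat \<Rightarrow> nat"
  assumes "strict_mono h" "finite X" "X \<noteq> {}"
  shows "Min X \<le> Min (h ` X)"
proof -
  have "Min (h ` X) = h (Min X)" using mono_Min_commute[OF strict_mono_mono[OF assms(1)] assms(2,3)] by simp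
  then show ?thesis using strict_mono_imp_increasing[OF assms(1)] by simp
qed

lemma psucc_image:
  fixes h :: "nat \<Rightarrow> nat"
  assumes "strict_mono h" "psucc B j"
  shows "psucc (\<lambda>i. h ` B i) j"
  unfolding psucc_def
proof (intro allI impI ballI)
  fix i i' a b assume "i < i'" "i' < j" "a \<in> h ` B i" "b \<in> h ` B i'"
  then obtain a0 b0 where "a = h a0" "b = h b0" "a0 \<in> B i" "b0 \<in> B i'" by blast
  then have "a0 < b0" using assms(2) \<open>i < i'\<close> \<open>i' < j\<close> unfolding psucc_def by blast
  then show "a < b" using assms(1) \<open>a = h a0\<close> \<open>b = h b0\<close> unfolding strict_mono_def by blast
qed

lemma psucc_inter: "psucc B j \<Longrightarrow> psucc (\<lambda>i. B i \<inter> Y) j"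
  unfolding psucc_def by (meson IntD1)

lemma Min_L:
  fixes L :: "nat set"
  assumes "X \<subseteq> L" "Inf L \<in> X" "finite X"
  shows "Min X = Inf L"
proof (rule Min_eqI)
  show "finite X" by fact
  show "Inf L \<in> X" by fact
  fix y assume "y \<in> X"
  then have "y \<in> L" using assms by blast
  then show "Inf L \<le> y" by (rule cInf_lower) simp
qed

lemma good0: "goodf schreier0"
  unfolding goodf_def
proof (intro conjI)
  show "hereditary schreier0" unfolding hereditary_def schreier0_def
    by (auto simp: subset_singleton_iff)
  show "spreading schreier0" unfolding spreading_def schreier0_def
  proof (intro allI impI)
    fix h :: "nat \<Rightarrow> nat" and F :: "nat set" assume h: "strict_mono h" and F: "F \<in> insert {} {{j} |j. 1 \<le> j}"
    then show "h ` F \<in> insert {} {{j} |j. 1 \<le> j}"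
      using strict_mono_imp_increasing[OF h] by (auto intro: order.trans)
  qed
  show "cptf schreier0" unfolding cptf_def
  proof (intro allI impI)
    fix L :: "nat set" assume L: "infinite L"
    obtain a where a: "a \<in> L" using L infinite_imp_nonempty by blast
    have "infinite (L - {a})" using L by simp
    then obtain b where b: "b \<in> L - {a}" using infinite_imp_nonempty by blast
    have "{a, b} \<notin> schreier0" using b unfolding schreier0_def by (auto simp: doubleton_eq_iff)
    then show "\<exists>F\<subseteq>L. finite F \<and> F \<notin> schreier0" using a b by (intro exI[where x="{a,b}"]) auto
  qed
  show "{} \<in> schreier0" by (simp add: schreier0_def)
  show "\<forall>F\<in>schreier0. finite F \<and> 0 \<notin> F" by (auto simp: schreier0_def)
qed

lemma rstepI:
  assumes "X \<noteq> {}" "\<forall>i<j. B i \<in> G \<and> finite (B i)" "psucc B j" "X = (\<Union>i<j. B i)" "j \<le> Min X"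
  shows "X \<in> rstep G"
  unfolding rstep_def using assms by blast

lemma rstepE:
  assumes "X \<in> rstep G" "X \<noteq> {}"
  obtains j B where "\<forall>i<j. B i \<in> G \<and> finite (B i)" "psucc B j" "X = (\<Union>i<j. B i)" "j \<le> Min X"
  using assms unfolding rstep_def by blast

lemma goodR:
  assumes g: "goodf G"
  shows "goodf (rstep G)"
proof -
  have hG: "hereditary G" and sG: "spreading G" and cG: "cptf G" and eG: "{} \<in> G"
    and fG: "\<forall>F\<in>G. finite F \<and> 0 \<notin> F" using g unfolding goodf_def by blast+
  have H: "hereditary (rstep G)"
    unfolding hereditary_def
  proof (intro ballI allI impI)
    fix X Y assume X: "X \<in> rstep G" and YX: "Y \<subseteq> X"
    show "Y \<in> rstep G"
    proof (cases "Y = {}")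
      case True then show ?thesis by (simp add: rstep_def)
    next
      case False
      then have "X \<noteq> {}" using YX by blast
      then obtain j B where B: "\<forall>i<j. B i \<in> G \<and> finite (B i)" "psucc B j" "X = (\<Union>i<j. B i)" "j \<le> Min X"
        using rstepE[OF X] by blast
      define B' where "B' i = B i \<inter> Y" for i
      have B'G: "\<forall>i<j. B' i \<in> G \<and> finite (B' i)"
        using B(1) hG unfolding hereditary_def B'_def by blast
      have ps: "psucc B' j" unfolding B'_def by (rule psucc_inter[OF B(2)])
      have Yeq: "Y = (\<Union>i<j. B' i)" using YX B(3) unfolding B'_def by blast
      have finX: "finite X" using B(1,3) by auto
      have "Min X \<le> Min Y" by (rule Min_antimono[OF YX False finX])
      then have "j \<le> Min Y" using B(4) by simp
      then show ?thesis using rstepI[OF False B'G ps Yeq] by simp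
    qed
  qed
  have S: "spreading (rstep G)"
    unfolding spreading_def
  proof (intro allI impI)
    fix h :: "nat \<Rightarrow> nat" and X assume h: "strict_mono h" and X: "X \<in> rstep G"
    show "h ` X \<in> rstep G"
    proof (cases "X = {}")
      case True then show ?thesis by (simp add: rstep_def)
    next
      case False
      then obtain j B where B: "\<forall>i<j. B i \<in> G \<and> finite (B i)" "psucc B j" "X = (\<Union>i<j. B i)" "j \<le> Min X"
        using rstepE[OF X] by blast
      have BG: "\<forall>i<j. h ` B i \<in> G \<and> finite (h ` B i)" using B(1) sG h unfolding spreading_def by blast
      have ps: "psucc (\<lambda>i. h ` B i) j" by (rule psucc_image[OF h B(2)])
      have eq: "h ` X = (\<Union>i<j. h ` B i)" using B(3) by auto
      have finX: "finite X" using B(1,3) by auto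
      have "Min X \<le> Min (h ` X)" by (rule Min_spread[OF h finX False])
      then have "j \<le> Min (h ` X)" using B(4) by simp
      moreover have "h ` X \<noteq> {}" using False by simp
      ultimately show ?thesis using rstepI[OF _ BG ps eq] by simp
    qed
  qed
  have C: "cptf (rstep G)"
    unfolding cptf_def
  proof (intro allI impI)
    fix L :: "nat set" assume L: "infinite L"
    show "\<exists>F\<subseteq>L. finite F \<and> F \<notin> rstep G"
    proof (rule ccontr)
      assume "\<not> ?thesis"
      then have all: "\<And>F. F \<subseteq> L \<Longrightarrow> finite F \<Longrightarrow> F \<in> rstep G" by blast
      define l where "l = Inf L"
      have lL: "l \<in> L" unfolding l_def using L by (simp add: Inf_nat_def1 infinite_imp_nonempty)
      obtain F :: "nat \<Rightarrow> nat set" where F: "\<forall>r. F r \<subseteq> L \<and> finite (F r) \<and> F r \<noteq> {} \<and> F r \<notin> G \<and> (\<forall>a\<in>F r. l < a)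
            \<and> (\<forall>r'. r < r' \<longrightarrow> (\<forall>a\<in>F r. \<forall>c\<in>F r'. a < c))"
        using blocks_exist[OF cG[unfolded cptf_def] eG L, of l] by (elim exE) (rule that)
      define X where "X = insert l (\<Union>r<l. F r)"
      have FL: "\<And>r. F r \<subseteq> L" and Ffin: "\<And>r. finite (F r)" and Fne: "\<And>r. F r \<noteq> {}"
        and FG: "\<And>r. F r \<notin> G" using F by blast+
      have XL: "X \<subseteq> L" using FL lL unfolding X_def by blast
      have finX: "finite X" using Ffin unfolding X_def by simp
      have Xne: "X \<noteq> {}" unfolding X_def by simp
      have "X \<in> rstep G" using all XL finX by blast
      obtain j B where B: "\<forall>i<j. B i \<in> G \<and> finite (B i)" "psucc B j" "X = (\<Union>i<j. B i)" "j \<le> Min X"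
        using rstepE[OF \<open>X \<in> rstep G\<close> Xne] by blast
      have mX: "Min X = l" unfolding l_def by (rule Min_L[OF XL _ finX]) (simp add: X_def l_def)
      have Ford: "\<And>r r'. r < r' \<Longrightarrow> \<forall>a\<in>F r. \<forall>c\<in>F r'. a < c" using F by blast
      have psF: "psucc F l" unfolding psucc_def using Ford by simp
      have "l < j"
      proof (rule blocks_bound[OF hG _ B(2) _ psF])
        show "\<forall>i<j. B i \<in> G" using B(1) by blast
        have "\<And>r. r < l \<Longrightarrow> F r \<subseteq> X" unfolding X_def by blast
        then show "\<forall>r<l. F r \<subseteq> (\<Union>i<j. B i) \<and> F r \<noteq> {} \<and> F r \<notin> G" using Fne FG B(3) by simp
        show "l \<in> (\<Union>i<j. B i)" using B(3) unfolding X_def by blast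
      qed
      then show False using B(4) mX by simp
    qed
  qed
  have E: "{} \<in> rstep G" by (simp add: rstep_def)
  have FZ: "\<forall>F\<in>rstep G. finite F \<and> 0 \<notin> F"
  proof
    fix X assume X: "X \<in> rstep G"
    show "finite X \<and> 0 \<notin> X"
    proof (cases "X = {}")
      case True then show ?thesis by simp
    next
      case False
      then obtain j B where B: "\<forall>i<j. B i \<in> G \<and> finite (B i)" "psucc B j" "X = (\<Union>i<j. B i)" "j \<le> Min X"
        using rstepE[OF X] by blast
      then show ?thesis using fG by auto
    qed
  qed
  show ?thesis unfolding goodf_def using H S C E FZ by blast
qed


lemma goodL:
  assumes g: "\<And>j. 1 \<le> j \<Longrightarrow> goodf (T j)"
  shows "goodf (schreier_limit T)"
proof -
  have hT: "\<And>j. 1 \<le> j \<Longrightarrow> hereditary (T j)" and sT: "\<And>j. 1 \<le> j \<Longrightarrow> spreading (T j)"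
    and cT: "\<And>j. 1 \<le> j \<Longrightarrow> cptf (T j)"
    and fT: "\<And>j. 1 \<le> j \<Longrightarrow> \<forall>F\<in>T j. finite F \<and> 0 \<notin> F" using g unfolding goodf_def by blast+
  have mem: "X \<in> schreier_limit T \<longleftrightarrow> X = {} \<or> (\<exists>j. 1 \<le> j \<and> j \<le> Min X \<and> X \<in> T j)" for X
    unfolding schreier_limit_def by simp
  have H: "hereditary (schreier_limit T)"
    unfolding hereditary_def
  proof (intro ballI allI impI)
    fix X Y assume X: "X \<in> schreier_limit T" and YX: "Y \<subseteq> X"
    show "Y \<in> schreier_limit T"
    proof (cases "Y = {}")
      case True then show ?thesis using mem by blast
    next
      case False
      then have "X \<noteq> {}" using YX by blast
      then obtain j where j: "1 \<le> j" "j \<le> Min X" "X \<in> T j" using X mem by blast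
      have "finite X" using fT j by blast
      then have "Min X \<le> Min Y" using Min_antimono[OF YX False] by simp
      moreover have "Y \<in> T j" using hT[OF j(1)] j(3) YX unfolding hereditary_def by blast
      ultimately show ?thesis using mem j by (meson order.trans)
    qed
  qed
  have S: "spreading (schreier_limit T)"
    unfolding spreading_def
  proof (intro allI impI)
    fix h :: "nat \<Rightarrow> nat" and X assume h: "strict_mono h" and X: "X \<in> schreier_limit T"
    show "h ` X \<in> schreier_limit T"
    proof (cases "X = {}")
      case True then show ?thesis using mem by simp
    next
      case False
      then obtain j where j: "1 \<le> j" "j \<le> Min X" "X \<in> T j" using X mem by blast
      have "finite X" using fT j by blast
      then have "Min X \<le> Min (h ` X)" using Min_spread[OF h _ False] by simp
      moreover have "h ` X \<in> T j" using sT[OF j(1)] j(3) h unfolding spreading_def by blast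
      ultimately show ?thesis using mem j by (meson order.trans)
    qed
  qed
  have C: "cptf (schreier_limit T)"
    unfolding cptf_def
  proof (intro allI impI)
    fix L :: "nat set" assume L: "infinite L"
    show "\<exists>F\<subseteq>L. finite F \<and> F \<notin> schreier_limit T"
    proof (rule ccontr)
      assume "\<not> ?thesis"
      then have all: "\<And>F. F \<subseteq> L \<Longrightarrow> finite F \<Longrightarrow> F \<in> schreier_limit T" by blast
      define l where "l = Inf L"
      have lL: "l \<in> L" unfolding l_def using L by (simp add: Inf_nat_def1 infinite_imp_nonempty)
      have "\<forall>j. \<exists>F. 1 \<le> j \<longrightarrow> F \<subseteq> L \<and> finite F \<and> F \<notin> T j"
        using cT L unfolding cptf_def by blast
      then obtain Fj :: "nat \<Rightarrow> nat set" where Fj: "\<And>j. 1 \<le> j \<Longrightarrow> Fj j \<subseteq> L \<and> finite (Fj j) \<and> Fj j \<notin> T j"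
        by metis
      define X where "X = insert l (\<Union>j\<in>{1..l}. Fj j)"
      have FjL: "\<And>j. j \<in> {1..l} \<Longrightarrow> Fj j \<subseteq> L \<and> finite (Fj j)" using Fj by simp
      have XL: "X \<subseteq> L" using FjL lL unfolding X_def by blast
      have finX: "finite X" using FjL unfolding X_def by simp
      have "X \<noteq> {}" unfolding X_def by simp
      moreover have "X \<in> schreier_limit T" using all XL finX by blast
      ultimately obtain j where j: "1 \<le> j" "j \<le> Min X" "X \<in> T j" using mem by blast
      have mX: "Min X = l" unfolding l_def by (rule Min_L[OF XL _ finX]) (simp add: X_def l_def)
      have "Fj j \<subseteq> X" using j mX unfolding X_def by auto
      then have "Fj j \<in> T j" using hT[OF j(1)] j(3) unfolding hereditary_def by blast
      then show False using Fj[OF j(1)] by blast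
    qed
  qed
  have E: "{} \<in> schreier_limit T" using mem by simp
  have FZ: "\<forall>F\<in>schreier_limit T. finite F \<and> 0 \<notin> F"
  proof
    fix X assume X: "X \<in> schreier_limit T"
    show "finite X \<and> 0 \<notin> X"
    proof (cases "X = {}")
      case True then show ?thesis by simp
    next
      case False
      then obtain j where j: "1 \<le> j" "j \<le> Min X" "X \<in> T j" using X mem by blast
      then show ?thesis using fT by blast
    qed
  qed
  show ?thesis unfolding goodf_def using H S C E FZ by blast
qed

lemma goodP:
  assumes g: "goodf G"
  shows "goodf (fam_power G n)"
proof -
  have hG: "hereditary G" and sG: "spreading G" and cG: "cptf G" and eG: "{} \<in> G"
    and fG: "\<forall>F\<in>G. finite F \<and> 0 \<notin> F" using g unfolding goodf_def by blast+
  have memE: "\<exists>B. X = (\<Union>i<n. B i) \<and> (\<forall>i<n. B i \<in> G) \<and> psucc B n" if "X \<in> fam_power G n" for X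
    using that unfolding fam_power_def psucc_def by (simp only: mem_Collect_eq)
  have memI: "X \<in> fam_power G n" if "\<forall>i<n. B i \<in> G" "psucc B n" "X = (\<Union>i<n. B i)" for X B
  proof -
    have "\<exists>B. X = (\<Union>i<n. B i) \<and> (\<forall>i<n. B i \<in> G) \<and> psucc B n" using that by blast
    then show ?thesis unfolding fam_power_def psucc_def by (simp only: mem_Collect_eq)
  qed
  have H: "hereditary (fam_power G n)"
    unfolding hereditary_def
  proof (intro ballI allI impI)
    fix X Y assume X: "X \<in> fam_power G n" and YX: "Y \<subseteq> X"
    obtain B where B: "\<forall>i<n. B i \<in> G" "psucc B n" "X = (\<Union>i<n. B i)" using memE[OF X] by blast
    define B' where "B' i = B i \<inter> Y" for i
    have B'G: "\<forall>i<n. B' i \<in> G" using B(1) hG unfolding hereditary_def B'_def by blast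
    have ps: "psucc B' n" unfolding B'_def by (rule psucc_inter[OF B(2)])
    have Yeq: "Y = (\<Union>i<n. B' i)" using YX B(3) unfolding B'_def by blast
    show "Y \<in> fam_power G n" by (rule memI[OF B'G ps Yeq])
  qed
  have S: "spreading (fam_power G n)"
    unfolding spreading_def
  proof (intro allI impI)
    fix h :: "nat \<Rightarrow> nat" and X assume h: "strict_mono h" and X: "X \<in> fam_power G n"
    obtain B where B: "\<forall>i<n. B i \<in> G" "psucc B n" "X = (\<Union>i<n. B i)" using memE[OF X] by blast
    have BG: "\<forall>i<n. h ` B i \<in> G" using B(1) sG h unfolding spreading_def by blast
    have ps: "psucc (\<lambda>i. h ` B i) n" by (rule psucc_image[OF h B(2)])
    have eq: "h ` X = (\<Union>i<n. h ` B i)" using B(3) by auto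
    show "h ` X \<in> fam_power G n" by (rule memI[OF BG ps eq])
  qed
  have C: "cptf (fam_power G n)"
    unfolding cptf_def
  proof (intro allI impI)
    fix L :: "nat set" assume L: "infinite L"
    show "\<exists>F\<subseteq>L. finite F \<and> F \<notin> fam_power G n"
    proof (rule ccontr)
      assume "\<not> ?thesis"
      then have all: "\<And>F. F \<subseteq> L \<Longrightarrow> finite F \<Longrightarrow> F \<in> fam_power G n" by blast
      define l where "l = Inf L"
      have lL: "l \<in> L" unfolding l_def using L by (simp add: Inf_nat_def1 infinite_imp_nonempty)
      obtain F :: "nat \<Rightarrow> nat set" where F: "\<forall>r. F r \<subseteq> L \<and> finite (F r) \<and> F r \<noteq> {} \<and> F r \<notin> G \<and> (\<forall>a\<in>F r. l < a)
            \<and> (\<forall>r'. r < r' \<longrightarrow> (\<forall>a\<in>F r. \<forall>c\<in>F r'. a < c))"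
        using blocks_exist[OF cG[unfolded cptf_def] eG L, of l] by (elim exE) (rule that)
      have FL: "\<And>r. F r \<subseteq> L" and Ffin: "\<And>r. finite (F r)" and Fne: "\<And>r. F r \<noteq> {}"
        and FG: "\<And>r. F r \<notin> G" using F by blast+
      define X where "X = insert l (\<Union>r<n. F r)"
      have XL: "X \<subseteq> L" using FL lL unfolding X_def by blast
      have finX: "finite X" using Ffin unfolding X_def by simp
      have "X \<in> fam_power G n" using all XL finX by blast
      then obtain B where B: "\<forall>i<n. B i \<in> G" "psucc B n" "X = (\<Union>i<n. B i)" using memE by blast
      have Ford: "\<And>r r'. r < r' \<Longrightarrow> \<forall>a\<in>F r. \<forall>c\<in>F r'. a < c" using F by blast
      have psF: "psucc F n" unfolding psucc_def using Ford by simp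
      have "n < n"
      proof (rule blocks_bound[OF hG B(1) B(2) _ psF])
        have "\<And>r. r < n \<Longrightarrow> F r \<subseteq> X" unfolding X_def by blast
        then show "\<forall>r<n. F r \<subseteq> (\<Union>i<n. B i) \<and> F r \<noteq> {} \<and> F r \<notin> G" using Fne FG B(3) by simp
        show "l \<in> (\<Union>i<n. B i)" using B(3) unfolding X_def by blast
      qed
      then show False by simp
    qed
  qed
  have E: "{} \<in> fam_power G n"
  proof -
    have "psucc (\<lambda>i. {}) n" unfolding psucc_def by simp
    then show ?thesis using eG by (intro memI[where B="\<lambda>i. {}"]) simp_all
  qed
  have FZ: "\<forall>F\<in>fam_power G n. finite F \<and> 0 \<notin> F"
  proof
    fix X assume X: "X \<in> fam_power G n"
    obtain B where B: "\<forall>i<n. B i \<in> G" "psucc B n" "X = (\<Union>i<n. B i)" using memE[OF X] by blast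
    then show "finite X \<and> 0 \<notin> X" using fG by auto
  qed
  show ?thesis unfolding goodf_def using H S C E FZ by blast
qed

lemma wfR:
  fixes Gc :: "nat set set"
  assumes hG: "hereditary Gc" and fin: "\<forall>F\<in>Gc. finite F" and cG: "cptf Gc"
  shows "wf {(t, s). \<exists>m. t = insert m s \<and> (\<forall>a\<in>s. a < m) \<and> t \<in> Gc}"
  unfolding wf_iff_no_infinite_down_chain
proof
  assume "\<exists>f. \<forall>i. (f (Suc i), f i) \<in> {(t, s). \<exists>m. t = insert m s \<and> (\<forall>a\<in>s. a < m) \<and> t \<in> Gc}"
  then obtain f :: "nat \<Rightarrow> nat set" where f0: "\<forall>i. (f (Suc i), f i) \<in> {(t, s). \<exists>m. t = insert m s \<and> (\<forall>a\<in>s. a < m) \<and> t \<in> Gc}"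
    by (elim exE) (rule that)
  have f: "\<exists>m. f (Suc i) = insert m (f i) \<and> (\<forall>a\<in>f i. a < m) \<and> f (Suc i) \<in> Gc" for i
    using f0 by simp
  have sub: "f i \<subseteq> f (Suc i)" for i using f[of i] by blast
  have inG: "f (Suc i) \<in> Gc" for i using f[of i] by blast
  have finf: "finite (f (Suc i))" for i using inG fin by blast
  have finf': "finite (f i)" for i using finf[of i] sub[of i] finite_subset by blast
  have card: "card (f (Suc i)) = Suc (card (f i))" for i
  proof -
    obtain m where m: "f (Suc i) = insert m (f i)" "\<forall>a\<in>f i. a < m" using f[of i] by blast
    then have "m \<notin> f i" by blast
    then show ?thesis using m(1) finf'[of i] by simp
  qed
  have cardge: "i \<le> card (f i)" for i
    by (induction i) (simp_all add: card)
  have mono: "i \<le> j \<Longrightarrow> f i \<subseteq> f j" for i j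
    using sub by (rule lift_Suc_mono_le)
  define L where "L = (\<Union>i. f i)"
  have infL: "infinite L"
  proof
    assume fL: "finite L"
    have "f (Suc (card L)) \<subseteq> L" unfolding L_def by blast
    then have "card (f (Suc (card L))) \<le> card L" using fL by (rule card_mono[rotated])
    then show False using cardge[of "Suc (card L)"] by simp
  qed
  obtain F where F: "F \<subseteq> L" "finite F" "F \<notin> Gc" using cG infL unfolding cptf_def by blast
  have "\<forall>x\<in>F. \<exists>i. x \<in> f i" using F(1) unfolding L_def by blast
  then obtain idx where idx: "\<And>x. x \<in> F \<Longrightarrow> x \<in> f (idx x)" by metis
  define i0 where "i0 = Max (insert 0 (idx ` F))"
  have "idx x \<le> i0" if "x \<in> F" for x unfolding i0_def using F(2) that by simp
  then have "F \<subseteq> f i0"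
  proof -
    assume h: "\<And>x. x \<in> F \<Longrightarrow> idx x \<le> i0"
    show "F \<subseteq> f i0"
    proof
      fix x assume x: "x \<in> F"
      then have "x \<in> f (idx x)" by (rule idx)
      moreover have "f (idx x) \<subseteq> f i0" by (rule mono[OF h[OF x]])
      ultimately show "x \<in> f i0" by blast
    qed
  qed
  then have "F \<subseteq> f (Suc i0)" using sub by blast
  then have "F \<in> Gc" using hG inG unfolding hereditary_def by blast
  then show False using F(3) by blast
qed


lemma ramsey_core:
  fixes Gc :: "nat set set" and Fm :: "nat \<Rightarrow> nat set set" and I :: "nat set"
  assumes fI: "finite I" and hF: "\<forall>i\<in>I. hereditary (Fm i)" and hG: "hereditary Gc"
    and cov: "Gc \<subseteq> (\<Union>i\<in>I. Fm i)" and fin: "\<forall>F\<in>Gc. finite F" and cG: "cptf Gc"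
  shows "s \<in> Gc \<Longrightarrow> infinite M \<Longrightarrow> (\<forall>a\<in>s. \<forall>b\<in>M. a < b) \<Longrightarrow>
     \<exists>N\<subseteq>M. infinite N \<and> (\<exists>c\<in>I. \<forall>F. F \<subseteq> N \<longrightarrow> s \<union> F \<in> Gc \<longrightarrow> s \<union> F \<in> Fm c)"
proof (induction s arbitrary: M rule: wf_induct_rule[OF wfR[OF hG fin cG]])
  case (1 s M)
  note IH = "1.IH"
  have sG: "s \<in> Gc" and infM: "infinite M" and sM: "\<forall>a\<in>s. \<forall>b\<in>M. a < b" using "1.prems" by blast+
  obtain c0 where c0: "c0 \<in> I" "s \<in> Fm c0" using cov sG by blast
  define gd where "gd X N c \<longleftrightarrow> N \<subseteq> X - {Inf X} \<and> infinite N \<and> c \<in> I \<and> s \<in> Fm c \<and>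
      (\<forall>F. F \<subseteq> N \<longrightarrow> insert (Inf X) s \<union> F \<in> Gc \<longrightarrow> insert (Inf X) s \<union> F \<in> Fm c)" for X N c
  have gdD: "N \<subseteq> X - {Inf X} \<and> infinite N \<and> c \<in> I \<and> s \<in> Fm c" if "gd X N c" for X N c
    using that unfolding gd_def by (elim conjE) (intro conjI)
  have gdP: "insert (Inf X) s \<union> F \<in> Fm c" if "gd X N c" "F \<subseteq> N" "insert (Inf X) s \<union> F \<in> Gc" for X N c F
    using that unfolding gd_def by (elim conjE) (erule allE[of _ F], simp)
  have gdI: "gd X N c" if "N \<subseteq> X - {Inf X}" "infinite N" "c \<in> I" "s \<in> Fm c"
     "\<And>F. F \<subseteq> N \<Longrightarrow> insert (Inf X) s \<union> F \<in> Gc \<Longrightarrow> insert (Inf X) s \<union> F \<in> Fm c" for X N c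
    unfolding gd_def using that by simp
  have ex: "\<exists>p. gd X (fst p) (snd p)" if X: "infinite X" "\<forall>a\<in>s. \<forall>b\<in>X. a < b" for X :: "nat set"
  proof -
    define m where "m = Inf X"
    have mX: "m \<in> X" unfolding m_def using X(1) by (simp add: Inf_nat_def1 infinite_imp_nonempty)
    have mle: "m \<le> b" if "b \<in> X" for b unfolding m_def using that by (rule cInf_lower) simp
    define t where "t = insert m s"
    define X' where "X' = X - {m}"
    have infX': "infinite X'" unfolding X'_def using X(1) by simp
    have tX': "\<forall>a\<in>t. \<forall>b\<in>X'. a < b"
    proof (intro ballI)
      fix a b assume a: "a \<in> t" and b: "b \<in> X'"
      then have bX: "b \<in> X" "b \<noteq> m" unfolding X'_def by blast+
      show "a < b"
      proof (cases "a = m")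
        case True then show ?thesis using mle[OF bX(1)] bX(2) by simp
      next
        case False then have "a \<in> s" using a t_def by blast
        then show ?thesis using X(2) bX(1) by blast
      qed
    qed
    show ?thesis
    proof (cases "t \<in> Gc")
      case True
      have "(t, s) \<in> {(t, s). \<exists>m. t = insert m s \<and> (\<forall>a\<in>s. a < m) \<and> t \<in> Gc}"
        using True X(2) mX unfolding t_def by blast
      from IH[OF this True infX' tX'] obtain N c where N: "N \<subseteq> X'" "infinite N" "c \<in> I"
        "\<forall>F. F \<subseteq> N \<longrightarrow> t \<union> F \<in> Gc \<longrightarrow> t \<union> F \<in> Fm c" by blast
      have "t \<in> Fm c" using N(4) True by (metis Un_empty_right empty_subsetI)
      then have "s \<in> Fm c" using hF N(3) unfolding hereditary_def t_def by blast
      have "gd X N c"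
      proof (rule gdI)
        show "N \<subseteq> X - {Inf X}" using N(1) unfolding X'_def m_def .
        show "infinite N" "c \<in> I" "s \<in> Fm c" by fact+
        fix F assume "F \<subseteq> N" "insert (Inf X) s \<union> F \<in> Gc"
        then show "insert (Inf X) s \<union> F \<in> Fm c" using N(4) unfolding t_def m_def by blast
      qed
      then show ?thesis by (intro exI[where x="(N, c)"]) simp
    next
      case False
      have "\<forall>F. F \<subseteq> X' \<longrightarrow> t \<union> F \<in> Gc \<longrightarrow> t \<union> F \<in> Fm c0"
      proof (intro allI impI)
        fix F assume "t \<union> F \<in> Gc"
        then have "t \<in> Gc" using hG unfolding hereditary_def by blast
        then show "t \<union> F \<in> Fm c0" using False by blast
      qed
      then have "gd X X' c0" using infX' c0 unfolding X'_def t_def m_def by (intro gdI) auto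
      then show ?thesis by (intro exI[where x="(X', c0)"]) simp
    qed
  qed
  define Nf where "Nf X = fst (SOME p. gd X (fst p) (snd p))" for X
  define cf where "cf X = snd (SOME p. gd X (fst p) (snd p))" for X
  have gdX: "gd X (Nf X) (cf X)" if "infinite X" "\<forall>a\<in>s. \<forall>b\<in>X. a < b" for X
    unfolding Nf_def cf_def using someI_ex[OF ex[OF that]] .
  define Xs where "Xs = rec_nat M (\<lambda>_ X. Nf X)"
  have Xs0: "Xs 0 = M" and XsS: "Xs (Suc i) = Nf (Xs i)" for i by (simp_all add: Xs_def)
  have inv: "infinite (Xs i) \<and> (\<forall>a\<in>s. \<forall>b\<in>Xs i. a < b) \<and> Xs i \<subseteq> M" for i
  proof (induction i)
    case 0 then show ?case using infM sM by (simp add: Xs0)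
  next
    case (Suc i)
    have g: "gd (Xs i) (Nf (Xs i)) (cf (Xs i))" by (rule gdX) (use Suc.IH in blast)+
    have sub: "Xs (Suc i) \<subseteq> Xs i" using gdD[OF g] by (simp add: XsS) blast
    have inf: "infinite (Xs (Suc i))" using gdD[OF g] by (simp add: XsS)
    have "\<forall>a\<in>s. \<forall>b\<in>Xs (Suc i). a < b" using Suc.IH sub by blast
    then show ?case using inf sub Suc.IH by blast
  qed
  have gdi: "gd (Xs i) (Xs (Suc i)) (cf (Xs i))" for i
  proof -
    have "gd (Xs i) (Nf (Xs i)) (cf (Xs i))" using gdX inv[of i] by blast
    then show ?thesis by (simp add: XsS)
  qed
  define m where "m i = Inf (Xs i)" for i
  have mX: "m i \<in> Xs i" for i unfolding m_def using inv[of i] by (simp add: Inf_nat_def1 infinite_imp_nonempty)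
  have mle: "m i \<le> b" if "b \<in> Xs i" for i b unfolding m_def using that by (rule cInf_lower) simp
  have anti1: "Xs (Suc i) \<subseteq> Xs i - {m i}" for i using gdD[OF gdi[of i]] unfolding m_def by blast
  have anti: "Xs j \<subseteq> Xs i" if "i \<le> j" for i j
  proof -
    have "\<And>n. Xs (Suc n) \<le> Xs n" using anti1 by blast
    then show ?thesis using that by (rule lift_Suc_antimono_le)
  qed
  have mlt: "m i < m j" if "i < j" for i j
  proof -
    have "m j \<in> Xs (Suc i)" using anti[OF Suc_leI[OF that]] mX[of j] by blast
    then have "m j \<in> Xs i" "m j \<noteq> m i" using anti1[of i] by blast+
    then show ?thesis using mle[of j i] mle[of "m j" i] by simp
  qed
  have sm: "strict_mono m" unfolding strict_mono_def using mlt by blast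
  define col where "col i = cf (Xs i)" for i
  have colI: "col i \<in> I" for i using gdD[OF gdi[of i]] unfolding col_def by blast
  have "finite (col ` UNIV)" using colI fI by (meson finite_subset image_subset_iff)
  then obtain c where c: "c \<in> col ` UNIV" "infinite (col -` {c})"
    using inf_img_fin_dom[OF _ infinite_UNIV_nat] by blast
  define N where "N = m ` (col -` {c})"
  have injm: "inj_on m (col -` {c})" using strict_mono_imp_inj_on[OF sm] by (rule inj_on_subset) (rule subset_UNIV)
  have infN: "infinite N"
  proof
    assume "finite N"
    then have "finite (col -` {c})" using finite_imageD[OF _ injm] unfolding N_def by blast
    then show False using c(2) by simp
  qed
  have NM: "N \<subseteq> M"
  proof
    fix y assume "y \<in> N"
    then obtain i where "y = m i" unfolding N_def by blast
    then show "y \<in> M" using mX[of i] inv[of i] by blast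
  qed
  have cI: "c \<in> I" using c(1) colI by blast
  have propN: "s \<union> F \<in> Fm c" if FN: "F \<subseteq> N" and sFG: "s \<union> F \<in> Gc" for F
  proof (cases "F = {}")
    case True
    obtain i0 where "col i0 = c" using c(1) by blast
    then show ?thesis using gdD[OF gdi[of i0]] True unfolding col_def by simp
  next
    case False
    have finF: "finite F" using fin sFG by (meson finite_Un)
    define x where "x = Min F"
    have xF: "x \<in> F" unfolding x_def using finF False by simp
    then obtain i where i: "x = m i" "col i = c" using FN unfolding N_def by blast
    have F'sub: "F - {x} \<subseteq> Xs (Suc i)"
    proof
      fix y assume y: "y \<in> F - {x}"
      then obtain j where j: "y = m j" using FN unfolding N_def by blast
      have "x \<le> y" unfolding x_def using y finF by simp
      then have "x < y" using y by simp
      then have "i < j" using i(1) j sm by (metis not_less_iff_gr_or_eq mlt)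
      then show "y \<in> Xs (Suc i)" using anti[OF Suc_leI[OF \<open>i < j\<close>]] mX[of j] j by blast
    qed
    have eq: "insert (Inf (Xs i)) s \<union> (F - {x}) = s \<union> F" using xF i(1) unfolding m_def by blast
    have "insert (Inf (Xs i)) s \<union> (F - {x}) \<in> Fm (cf (Xs i))"
      using gdP[OF gdi[of i] F'sub] eq sFG by simp
    then show ?thesis using eq i(2) col_def by simp
  qed
  show ?case using NM infN cI propN by blast
qed

lemma good_schreier:
  fixes \<xi> :: "'o::wellorder"
  assumes fs: "fundamental_system \<beta> \<xi>" and le: "\<eta> \<le> \<xi>"
  shows "goodf (schreier \<beta> \<eta>)"
proof (rule schreier_induct[where P = goodf, OF fs])
  show "goodf schreier0" by (rule good0)
  fix G assume "goodf G"
  then show "goodf (schreier_step G)" using goodR step_eq by simp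
next
  fix T :: "nat \<Rightarrow> nat set set" assume "\<And>j. 1 \<le> j \<Longrightarrow> goodf (T j)"
  then show "goodf (schreier_limit T)" by (rule goodL)
next
  show "\<eta> \<le> \<xi>" by (rule le)
qed

lemma sub_enum:
  fixes M N :: "nat set"
  assumes M: "infinite M" and NM: "N \<subseteq> M" and N: "infinite N"
  shows "\<exists>g. strict_mono g \<and> (\<forall>i. enumerate N i = enumerate M (g i))"
proof -
  define g where "g i = inv_into UNIV (enumerate M) (enumerate N i)" for i
  have eq: "enumerate M (g i) = enumerate N i" for i
  proof -
    have "enumerate N i \<in> M" using enumerate_in_set[OF N] NM by blast
    then have "enumerate N i \<in> range (enumerate M)" using range_enumerate[OF M] by simp
    then show ?thesis unfolding g_def by (rule f_inv_into_f)
  qed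
  have "strict_mono g"
    unfolding strict_mono_def
  proof (intro allI impI)
    fix x y :: nat assume "x < y"
    then have "enumerate N x < enumerate N y" using enumerate_mono[OF _ N] by blast
    then have "enumerate M (g x) < enumerate M (g y)" using eq by simp
    then show "g x < g y" using enumerate_mono_iff[OF M] by simp
  qed
  then show ?thesis using eq by (intro exI[where x=g]) simp
qed

lemma image_shift:
  fixes M N :: "nat set" and F :: "nat set"
  assumes M: "infinite M" and NM: "N \<subseteq> M" and N: "infinite N"
  shows "\<exists>h. strict_mono h \<and> (\<forall>F. 0 \<notin> F \<longrightarrow>
      (\<lambda>i. enumerate N (i - 1)) ` F = (\<lambda>i. enumerate M (i - 1)) ` (h ` F))"
proof -
  obtain g where g: "strict_mono g" "\<And>i. enumerate N i = enumerate M (g i)"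
    using sub_enum[OF M NM N] by blast
  define h where "h i = (if i = 0 then 0 else Suc (g (i - 1)))" for i
  have "strict_mono h"
    unfolding strict_mono_Suc_iff
  proof
    fix n show "h n < h (Suc n)"
      using g(1) unfolding h_def strict_mono_def by (cases n) auto
  qed
  moreover have "(\<lambda>i. enumerate N (i - 1)) ` F = (\<lambda>i. enumerate M (i - 1)) ` (h ` F)" if "0 \<notin> F" for F
  proof -
    have "enumerate N (i - 1) = enumerate M (h i - 1)" if "i \<in> F" for i
      using that \<open>0 \<notin> F\<close> g(2) unfolding h_def by (cases i) auto
    then show ?thesis by (simp add: image_image cong: image_cong)
  qed
  ultimately show ?thesis by blast
qed

theorem lemma2p14:
  fixes M :: "nat set" and n k :: nat and \<xi> :: "'o::wellorder"
    and \<beta> :: "'o \<Rightarrow> nat \<Rightarrow> 'o" and \<F> :: "nat \<Rightarrow> nat set set"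
  assumes "infinite M" and "M \<subseteq> {1..}"
    and "1 \<le> n"
    and "countable {..\<xi>}"
    and "fundamental_system \<beta> \<xi>"
    and "\<forall>i\<in>{1..k}. hereditary (\<F> i) \<and> (\<forall>A\<in>\<F> i. finite A \<and> A \<subseteq> {1..})"
    and "fam_image M (fam_power (schreier \<beta> \<xi>) n) = (\<Union>i\<in>{1..k}. \<F> i)"
  shows "\<exists>N i\<^sub>0. N \<subseteq> M \<and> infinite N \<and> i\<^sub>0 \<in> {1..k} \<and>
           fam_image N (fam_power (schreier \<beta> \<xi>) n) \<subseteq> \<F> i\<^sub>0"
proof -
  note M = assms(1) and hyp = assms(6) and eqU = assms(7)
  define P where "P = fam_power (schreier \<beta> \<xi>) n"
  have gP: "goodf P" unfolding P_def by (rule goodP[OF good_schreier[OF assms(5) order_refl]])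
  have hP: "hereditary P" and sP: "spreading P" and cP: "cptf P" and eP: "{} \<in> P"
    and fP: "\<forall>F\<in>P. finite F \<and> 0 \<notin> F" using gP unfolding goodf_def by blast+
  define e where "e i = enumerate M (i - 1)" for i
  define Gc where "Gc = fam_image M P"
  have Gc_eq: "Gc = (\<lambda>F. e ` F) ` P" unfolding Gc_def fam_image_def e_def by simp
  have memGc: "Y \<in> Gc \<longleftrightarrow> (\<exists>F\<in>P. Y = e ` F)" for Y unfolding Gc_eq by (simp add: image_iff)
  have GcU: "Gc = (\<Union>i\<in>{1..k}. \<F> i)" using eqU unfolding Gc_def P_def .
  have hG: "hereditary Gc"
    unfolding GcU hereditary_def
  proof (intro ballI allI impI)
    fix A B assume A: "A \<in> (\<Union>i\<in>{1..k}. \<F> i)" and BA: "B \<subseteq> A"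
    then obtain i where i: "i \<in> {1..k}" "A \<in> \<F> i" by blast
    then have "B \<in> \<F> i" using hyp BA unfolding hereditary_def by blast
    then show "B \<in> (\<Union>i\<in>{1..k}. \<F> i)" using i by blast
  qed
  have fin: "\<forall>F\<in>Gc. finite F" unfolding GcU using hyp by blast
  have cov: "Gc \<subseteq> (\<Union>i\<in>{1..k}. \<F> i)" unfolding GcU by (rule order_refl)
  have einj: "inj_on e {1..}"
  proof (rule inj_onI)
    fix x y :: nat assume "x \<in> {1..}" "y \<in> {1..}" "e x = e y"
    then have "x - 1 = y - 1" unfolding e_def using inj_enumerate[OF M] by (simp add: inj_eq)
    then show "x = y" using \<open>x \<in> {1..}\<close> \<open>y \<in> {1..}\<close> by simp
  qed
  have cG: "cptf Gc"
    unfolding cptf_def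
  proof (intro allI impI)
    fix L :: "nat set" assume L: "infinite L"
    show "\<exists>F\<subseteq>L. finite F \<and> F \<notin> Gc"
    proof (rule ccontr)
      assume "\<not> ?thesis"
      then have all: "\<And>F. F \<subseteq> L \<Longrightarrow> finite F \<Longrightarrow> F \<in> Gc" by blast
      have LM: "L \<subseteq> M"
      proof
        fix x assume "x \<in> L"
        then have "{x} \<in> Gc" using all by simp
        then obtain F where "{x} = e ` F" using memGc by blast
        then have "x \<in> e ` F" by blast
        then obtain i where "x = e i" by blast
        then show "x \<in> M" unfolding e_def using enumerate_in_set[OF M] by simp
      qed
      define L' where "L' = {i. 1 \<le> i \<and> e i \<in> L}"
      have "L \<subseteq> e ` L'"
      proof
        fix x assume x: "x \<in> L"
        then obtain q where q: "enumerate M q = x" using enumerate_Ex[OF M] LM by blast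
        then have "e (Suc q) = x" unfolding e_def by simp
        moreover have "Suc q \<in> L'" unfolding L'_def using x \<open>e (Suc q) = x\<close> by simp
        ultimately show "x \<in> e ` L'" by (intro image_eqI[where x="Suc q"]) simp_all
      qed
      have infL': "infinite L'"
      proof
        assume "finite L'"
        then have "finite (e ` L')" by simp
        then have "finite L" using \<open>L \<subseteq> e ` L'\<close> finite_subset by blast
        then show False using L by simp
      qed
      obtain F' where F': "F' \<subseteq> L'" "finite F'" "F' \<notin> P" using cP infL' unfolding cptf_def by blast
      have "e ` F' \<subseteq> L" using F'(1) unfolding L'_def by blast
      then have "e ` F' \<in> Gc" using all F'(2) by simp
      then have exF: "\<exists>F. F \<in> P \<and> e ` F' = e ` F" by (simp only: memGc Bex_def)
      define F where "F = (SOME F. F \<in> P \<and> e ` F' = e ` F)"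
      have FF: "F \<in> P \<and> e ` F' = e ` F" unfolding F_def by (rule someI_ex[OF exF])
      have F: "F \<in> P" "e ` F' = e ` F" using FF by (rule conjunct1, rule conjunct2)
      have F1: "F \<subseteq> {1..}"
      proof
        fix x assume x: "x \<in> F"
        have "finite F \<and> 0 \<notin> F" using fP F(1) by (rule bspec)
        then have z: "0 \<notin> F" by (rule conjunct2)
        have "x \<noteq> 0"
        proof
          assume "x = 0"
          then show False using x z by simp
        qed
        then show "x \<in> {1..}" by simp
      qed
      have F'1: "F' \<subseteq> {1..}"
      proof
        fix x assume "x \<in> F'"
        then have "x \<in> L'" using F'(1) by (rule subsetD[rotated])
        then show "x \<in> {1..}" unfolding L'_def by simp
      qed
      have iff: "e ` F' = e ` F \<longleftrightarrow> F' = F" by (rule inj_on_image_eq_iff[OF einj F'1 F1])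
      have "F' = F" by (rule iffD1[OF iff F(2)])
      then show False using F(1) F'(3) by simp
    qed
  qed
  have eG: "{} \<in> Gc" unfolding memGc using eP by (intro bexI[where x="{}"]) simp_all
  obtain N c where N: "N \<subseteq> M" "infinite N" "c \<in> {1..k}"
    "\<forall>F. F \<subseteq> N \<longrightarrow> {} \<union> F \<in> Gc \<longrightarrow> {} \<union> F \<in> \<F> c"
  proof -
    have hF: "\<forall>i\<in>{1..k}. hereditary (\<F> i)" using hyp by blast
    have "\<exists>N\<subseteq>M. infinite N \<and> (\<exists>c\<in>{1..k}. \<forall>F. F \<subseteq> N \<longrightarrow> {} \<union> F \<in> Gc \<longrightarrow> {} \<union> F \<in> \<F> c)"
      by (rule ramsey_core[OF finite_atLeastAtMost hF hG cov fin cG eG M]) simp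
    then show ?thesis using that by blast
  qed
  obtain h where h: "strict_mono h" "\<And>F. 0 \<notin> F \<Longrightarrow>
      (\<lambda>i. enumerate N (i - 1)) ` F = (\<lambda>i. enumerate M (i - 1)) ` (h ` F)"
    using image_shift[OF M N(1) N(2)] by blast
  have "fam_image N P \<subseteq> \<F> c"
  proof
    fix Y assume "Y \<in> fam_image N P"
    then obtain F where F: "F \<in> P" "Y = (\<lambda>i. enumerate N (i - 1)) ` F" unfolding fam_image_def by blast
    have "Y = e ` (h ` F)" using h(2) fP F unfolding e_def by simp
    moreover have "h ` F \<in> P" using sP h(1) F(1) unfolding spreading_def by blast
    ultimately have "Y \<in> Gc" unfolding memGc by (intro bexI[where x="h ` F"])
    moreover have "Y \<subseteq> N" using F(2) enumerate_in_set[OF N(2)] by blast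
    ultimately show "Y \<in> \<F> c" using N(4) by simp
  qed
  then show ?thesis using N unfolding P_def by blast
qed

end
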